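(* Let $k\geq 2$, let $\mathbb Z_0=\mathbb Z\setminus\{0\}$ and let $\{\lambda_j\}_{j\in\mathbb Z_0}$ be positive numbers. If there are sequences of positive numbers $z=\{z_j\}_{j\in\mathbb Z_0}$, $\tilde z=\{\tilde z_j\}_{j\in\mathbb Z_0}$ satisfying $$z_i=\lambda_i\Bigl(\frac{1}{1+\sum_{j\in\mathbb Z_0}\tilde z_j}\Bigr)^{k},\qquad \tilde z_i=\lambda_i\Bigl(\frac{1}{1+\sum_{j\in\mathbb Z_0}z_j}\Bigr)^{k},\qquad i\in\mathbb Z_0,$$ then the series $\sum_{j\in\mathbb Z_0}z_j$, $\sum_{j\in\mathbb Z_0}\tilde z_j$ and $\sum_{j\in\mathbb Z_0}\lambda_j$ all converge.
   Context: If one of the sums $\sum_j z_j$, $\sum_j\tilde z_j$ is $+\infty$, the corresponding right-hand side is interpreted as $0$. *)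

theory Defs
  imports "HOL-Analysis.Analysis"
begin

definition Z0 :: "int set" where "Z0 = UNIV - {0}"

text \<open>The quantity 1/(1 + sum_j w_j), where a divergent sum (= +infinity for positive
terms) is interpreted as giving 0.\<close>
definition recip_sum :: "(int \<Rightarrow> real) \<Rightarrow> real" where
  "recip_sum w = (if w summable_on Z0 then 1 / (1 + infsum w Z0) else 0)"

end

theory Submission
  imports Defs
begin

theorem mainTheorem4:
  fixes k :: nat and lam z zt :: "int \<Rightarrow> real"
  assumes "k \<ge> 2"
    and "\<forall>j\<in>Z0. lam j > 0"
    and "\<forall>j\<in>Z0. z j > 0"
    and "\<forall>j\<in>Z0. zt j > 0"
    and "\<forall>i\<in>Z0. z i = lam i * (recip_sum zt) ^ k"
    and "\<forall>i\<in>Z0. zt i = lam i * (recip_sum z) ^ k"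
  shows "z summable_on Z0 \<and> zt summable_on Z0 \<and> lam summable_on Z0"
proof -
  have one: "(1::int) \<in> Z0" by (simp add: Z0_def)
  have "recip_sum zt \<noteq> 0"
  proof
    assume "recip_sum zt = 0"
    hence "z 1 = 0" using assms(5) one using assms(1) by simp
    thus False using assms(3) one by force
  qed
  hence szt: "zt summable_on Z0" unfolding recip_sum_def by (auto split: if_splits)
  have "recip_sum z \<noteq> 0"
  proof
    assume "recip_sum z = 0"
    hence "zt 1 = 0" using assms(6) one using assms(1) by simp
    thus False using assms(4) one by force
  qed
  hence sz: "z summable_on Z0" unfolding recip_sum_def by (auto split: if_splits)
  define c where "c = recip_sum z"
  have c0: "c \<noteq> 0" using \<open>recip_sum z \<noteq> 0\<close> c_def by simp
  have "(\<lambda>x. inverse (c ^ k) * zt x) summable_on Z0"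
    using szt by (rule summable_on_cmult_right)
  moreover have "\<And>x. x \<in> Z0 \<Longrightarrow> inverse (c ^ k) * zt x = lam x"
    using assms(6) c0 c_def by (simp add: field_simps)
  ultimately have "lam summable_on Z0" using summable_on_cong[of Z0 "\<lambda>x. inverse (c ^ k) * zt x" lam] by simp
  with sz szt show ?thesis by simp
qed

end
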